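(* Let $1\le q_1<q_2<\cdots$ be a strictly increasing sequence of integers satisfying $q_{n+1}<2q_n$ for all $n\in\mathbb{N}$, and let $S_n=q_1+\dots+q_n$. Let $k_0\ge 0$ be an integer. Then $S_n-q_{n+1}\ge 2k_0$ for every integer $n\ge q_1+2k_0+1$. *)

theory Defs
  imports Main
begin

end

theory Submission
  imports Defs
begin

lemma aux:
  fixes q :: "nat \<Rightarrow> int"
  assumes ratio: "\<And>m. m \<ge> 1 \<Longrightarrow> q (Suc m) < 2 * q m"
  shows "(\<Sum>i=1..Suc m. q i) - q (Suc (Suc m)) \<ge> int (Suc m) - q 1"
proof (induction m)
  case 0
  have "q 2 < 2 * q 1" using ratio[of 1] by (simp add: numeral_2_eq_2)
  then show ?case by (simp add: numeral_2_eq_2)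
next
  case (Suc m)
  have r: "q (Suc (Suc (Suc m))) < 2 * q (Suc (Suc m))" using ratio[of "Suc (Suc m)"] by simp
  have "(\<Sum>i=1..Suc (Suc m). q i) = (\<Sum>i=1..Suc m. q i) + q (Suc (Suc m))" by simp
  then show ?case using Suc.IH r by simp
qed

theorem lemma2p2:
  fixes q :: "nat \<Rightarrow> int" and k0 :: int and n :: nat
  assumes q1: "1 \<le> q 1"
    and incr: "\<And>m. m \<ge> 1 \<Longrightarrow> q m < q (Suc m)"
    and ratio: "\<And>m. m \<ge> 1 \<Longrightarrow> q (Suc m) < 2 * q m"
    and k0: "0 \<le> k0"
    and n: "int n \<ge> q 1 + 2 * k0 + 1"
  shows "(\<Sum>i=1..n. q i) - q (Suc n) \<ge> 2 * k0"
proof -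
  obtain m where m: "n = Suc m" using n q1 k0 by (cases n) auto
  show ?thesis using aux[of q m, OF ratio] n m by simp
qed

end
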